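(* Let $\bar x,\bar x'\in\bar{\mathcal X}$ with $\bar x\neq\bar x'$, and let $Q_{\bar x},Q_{\bar x'}$ be their orthogonal projections onto $\mathcal M$. Then with probability $1$, $Q_{\bar x}\neq Q_{\bar x'}$.
   Context: $\mathcal M\subset\mathbb R^d$ is an $m$-dimensional ($m<d$) smooth compact connected manifold without boundary with reach $R>0$; $\mu$ is a probability measure on $\mathcal M$ with a density with respect to volume; natural data are i.i.d. $\sim\mu$, and each augmented point $\bar x$ is generated from a natural point $x$ with law $(\varepsilon_{\rm p}\sqrt{2\pi})^{-d}\exp(-\|x-\bar x\|^2/(2\varepsilon_{\rm p}^2))$, where $\varepsilon_{\rm p}=\eta^{1/d}\varepsilon^{\tau+1}$ with $\tau,\eta>0$ and $0<\varepsilon\le\min\{1,R/2\}$. It is assumed that all augmented points lie in the tubular neighbourhood $\{x+h:x\in\mathcal M, h\perp T_x\mathcal M,\|h\|<\varepsilon^{\tau+1}\}$, so each has a unique nearest point (orthogonal projection) $Q_{\bar x}$ on $\mathcal M$. *)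

theory Defs
  imports "HOL-Analysis.Analysis" "HOL-Probability.Probability"
begin

fun iter_dderiv :: "'a::real_normed_vector list \<Rightarrow> ('a \<Rightarrow> 'b::real_normed_vector) \<Rightarrow> 'a \<Rightarrow> 'b" where
  "iter_dderiv [] f = f"
| "iter_dderiv (v # vs) f = (\<lambda>x. frechet_derivative (iter_dderiv vs f) (at x) v)"

definition smooth_on :: "'a::real_normed_vector set \<Rightarrow> ('a \<Rightarrow> 'b::real_normed_vector) \<Rightarrow> bool" where
  "smooth_on S f \<longleftrightarrow> (\<forall>vs. \<forall>x\<in>S. iter_dderiv vs f differentiable (at x))"

definition smooth_submanifold :: "('a::euclidean_space) set \<Rightarrow> nat \<Rightarrow> bool" where
  "smooth_submanifold M m \<longleftrightarrow>
     (\<forall>p\<in>M. \<exists>U V (\<phi>::'a \<Rightarrow> 'a) (\<psi>::'a \<Rightarrow> 'a) L.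
        open U \<and> p \<in> U \<and> open V \<and> subspace L \<and> dim L = m \<and>
        smooth_on U \<phi> \<and> smooth_on V \<psi> \<and>
        \<phi> ` U = V \<and> (\<forall>x\<in>U. \<psi> (\<phi> x) = x) \<and> (\<forall>y\<in>V. \<phi> (\<psi> y) = y) \<and>
        \<phi> ` (U \<inter> M) = V \<inter> L)"

definition tangent_space :: "('a::euclidean_space) set \<Rightarrow> 'a \<Rightarrow> 'a set" where
  "tangent_space M p = {v. \<exists>\<gamma>::real \<Rightarrow> 'a. \<gamma> 0 = p \<and> (\<forall>t. \<gamma> t \<in> M) \<and>
                                   (\<gamma> has_vector_derivative v) (at 0)}"

definition reach :: "('a::euclidean_space) set \<Rightarrow> real" where
  "reach M = Sup {r. r > 0 \<and> (\<forall>x. infdist x M < r \<longrightarrow> (\<exists>!p. p \<in> M \<and> dist x p = infdist x M))}"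

definition proj_onto :: "('a::euclidean_space) set \<Rightarrow> 'a \<Rightarrow> 'a" where
  "proj_onto M y = (THE p. p \<in> M \<and> dist y p = infdist y M)"

definition normal_tube :: "('a::euclidean_space) set \<Rightarrow> real \<Rightarrow> 'a set" where
  "normal_tube M r = {x + h | x h. x \<in> M \<and> (\<forall>v\<in>tangent_space M x. inner h v = 0) \<and> norm h < r}"

section \<open>m-dimensional Hausdorff measure (= Riemannian volume on an m-dim submanifold)\<close>

definition hausdorff_pre :: "nat \<Rightarrow> real \<Rightarrow> 'a::metric_space set \<Rightarrow> ennreal" where
  "hausdorff_pre m \<delta> A =
     (INF C \<in> {C :: nat \<Rightarrow> 'a set. A \<subseteq> (\<Union>i. C i) \<and> (\<forall>i. bounded (C i) \<and> diameter (C i) \<le> \<delta>)}.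
        (\<Sum>i. ennreal (unit_ball_vol (real m) * (diameter (C i) / 2) ^ m)))"

definition hausdorff_outer :: "nat \<Rightarrow> 'a::metric_space set \<Rightarrow> ennreal" where
  "hausdorff_outer m A = (SUP \<delta> \<in> {0<..}. hausdorff_pre m \<delta> A)"

definition hausdorff_measure :: "nat \<Rightarrow> ('a::metric_space) measure" where
  "hausdorff_measure m = measure_of UNIV (sets borel) (hausdorff_outer m)"

definition gauss_density :: "real \<Rightarrow> real^'d \<Rightarrow> real" where
  "gauss_density s z = (s * sqrt (2 * pi)) powi (- int CARD('d)) * exp (- (norm z)\<^sup>2 / (2 * s\<^sup>2))"

end

theory Submission
  imports Defs
begin


lemma nearest_normal:
  fixes M :: "'a::euclidean_space set"
  assumes "p \<in> M" "\<And>q. q \<in> M \<Longrightarrow> dist y p \<le> dist y q" "v \<in> tangent_space M p"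
  shows "(y - p) \<bullet> v = 0"
proof -
  obtain \<gamma> where g: "\<gamma> 0 = p" "\<And>t. \<gamma> t \<in> M" "(\<gamma> has_vector_derivative v) (at 0)"
    using assms(3) unfolding tangent_space_def by blast
  define f where "f t = (y - \<gamma> t) \<bullet> (y - \<gamma> t)" for t
  have d: "(\<gamma> has_derivative (\<lambda>h. h *\<^sub>R v)) (at 0)" using g(3) by (simp add: has_vector_derivative_def)
  have D: "((\<lambda>t. (y - \<gamma> t) \<bullet> (y - \<gamma> t)) has_derivative (\<lambda>h. (y - \<gamma> 0) \<bullet> (- (h *\<^sub>R v)) + (- (h *\<^sub>R v)) \<bullet> (y - \<gamma> 0))) (at 0)"
  proof -
    have e: "((\<lambda>t. y - \<gamma> t) has_derivative (\<lambda>h. - (h *\<^sub>R v))) (at 0)"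
      using has_derivative_diff[OF has_derivative_const d, of y] by simp
    show ?thesis using has_derivative_inner[OF e e] by simp
  qed
  have Df: "(f has_real_derivative (-2 * ((y - p) \<bullet> v))) (at 0)"
  proof -
    have eq: "(\<lambda>h. (y - \<gamma> 0) \<bullet> (- (h *\<^sub>R v)) + (- (h *\<^sub>R v)) \<bullet> (y - \<gamma> 0)) = (\<lambda>h. (-2 * ((y - p) \<bullet> v)) * h)"
      using g(1) by (auto simp: fun_eq_iff algebra_simps inner_commute)
    show ?thesis using D unfolding f_def has_field_derivative_def eq .
  qed
  moreover have L: "\<forall>t. \<bar>0 - t\<bar> < 1 \<longrightarrow> f 0 \<le> f t"
  proof (intro allI impI)
    fix t :: real
    have "dist y p \<le> dist y (\<gamma> t)" using assms(2) g(2) by blast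
    then have "(dist y p)^2 \<le> (dist y (\<gamma> t))^2" by (simp add: power_mono)
    then show "f 0 \<le> f t" unfolding f_def g(1) by (simp add: dist_norm power2_norm_eq_inner)
  qed
  have "-2 * ((y - p) \<bullet> v) = 0" by (rule DERIV_local_min[OF Df _ L]) simp
  then show ?thesis by simp
qed

lemma chart_tangent:
  fixes \<psi> :: "'a::euclidean_space \<Rightarrow> 'a" and M :: "'a set"
  assumes "open V" "subspace L" "a \<in> V" "a \<in> L" "l \<in> L" "\<psi> differentiable (at a)"
    "\<And>b. b \<in> V \<Longrightarrow> b \<in> L \<Longrightarrow> \<psi> b \<in> M"
  shows "\<exists>c>0. c *\<^sub>R frechet_derivative \<psi> (at a) l \<in> tangent_space M (\<psi> a)"
proof -
  obtain e where e: "e > 0" "ball a e \<subseteq> V" using assms(1,3) open_contains_ball by blast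
  define c where "c = e / (2 * (norm l + 1))"
  have nl: "0 < norm l + 1" using norm_ge_zero[of l] by linarith
  have c: "c > 0" unfolding c_def using e nl by simp
  have cl: "c * norm l < e"
  proof -
    have "c * norm l \<le> c * (norm l + 1)" using c by simp
    also have "\<dots> = e / 2" unfolding c_def using nl by (simp add: field_simps)
    finally show ?thesis using e by simp
  qed
  define h where "h t = a + (c * sin t) *\<^sub>R l" for t
  define D where "D = frechet_derivative \<psi> (at a)"
  have dpsi: "(\<psi> has_derivative D) (at a)" using assms(6) unfolding D_def by (simp add: frechet_derivative_works)
  have lin: "linear D" using dpsi has_derivative_linear by blast
  have dh: "(h has_derivative (\<lambda>s. (c * s) *\<^sub>R l)) (at 0)"
  proof -
    have "((\<lambda>t. a + (c * sin t) *\<^sub>R l) has_derivative (\<lambda>s. 0 + (c * (s * cos 0)) *\<^sub>R l)) (at 0)"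
      by (intro derivative_eq_intros) auto
    then show ?thesis unfolding h_def by simp
  qed
  have h0: "h 0 = a" unfolding h_def by simp
  have "((\<psi> \<circ> h) has_derivative (D \<circ> (\<lambda>s. (c * s) *\<^sub>R l))) (at 0)"
    using diff_chain_at[OF dh] dpsi h0 by simp
  moreover have "D \<circ> (\<lambda>s. (c * s) *\<^sub>R l) = (\<lambda>s. s *\<^sub>R (c *\<^sub>R D l))"
    using lin by (auto simp: fun_eq_iff linear_scale mult.commute)
  ultimately have "((\<psi> \<circ> h) has_vector_derivative (c *\<^sub>R D l)) (at 0)"
    by (simp add: has_vector_derivative_def)
  moreover have "(\<psi> \<circ> h) 0 = \<psi> a" using h0 by simp
  moreover have "(\<psi> \<circ> h) t \<in> M" for t
  proof -
    have "h t \<in> L" unfolding h_def using assms(2,4,5) by (simp add: subspace_add subspace_scale)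
    moreover have "h t \<in> ball a e"
    proof -
      have "norm ((c * sin t) *\<^sub>R l) = c * \<bar>sin t\<bar> * norm l" using c by (simp add: abs_mult)
      also have "\<dots> \<le> c * 1 * norm l" using c abs_sin_le_one[of t]
        by (intro mult_right_mono mult_left_mono) auto
      finally show ?thesis using cl unfolding h_def by (simp add: dist_norm)
    qed
    ultimately show ?thesis using assms(7) e(2) by auto
  qed
  ultimately show ?thesis unfolding tangent_space_def D_def using c by blast
qed

lemma smooth_on_diff: "smooth_on S f \<Longrightarrow> x \<in> S \<Longrightarrow> f differentiable (at x)"
  unfolding smooth_on_def by (metis iter_dderiv.simps(1))

lemma tangent_nonzero:
  fixes M :: "'a::euclidean_space set"
  assumes "smooth_submanifold M m" "1 \<le> m" "p \<in> M"
  shows "\<exists>v. v \<noteq> 0 \<and> v \<in> tangent_space M p"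
proof -
  obtain U V and \<phi> \<psi> :: "'a \<Rightarrow> 'a" and L where ch: "open U" "p \<in> U" "open V" "subspace L" "dim L = m"
    "smooth_on U \<phi>" "smooth_on V \<psi>" "\<phi> ` U = V" "\<forall>x\<in>U. \<psi> (\<phi> x) = x" "\<forall>y\<in>V. \<phi> (\<psi> y) = y"
    "\<phi> ` (U \<inter> M) = V \<inter> L"
  proof -
    have "\<exists>U V (\<phi>::'a \<Rightarrow> 'a) (\<psi>::'a \<Rightarrow> 'a) L.
        open U \<and> p \<in> U \<and> open V \<and> subspace L \<and> dim L = m \<and>
        smooth_on U \<phi> \<and> smooth_on V \<psi> \<and>
        \<phi> ` U = V \<and> (\<forall>x\<in>U. \<psi> (\<phi> x) = x) \<and> (\<forall>y\<in>V. \<phi> (\<psi> y) = y) \<and>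
        \<phi> ` (U \<inter> M) = V \<inter> L"
      using assms(1,3) unfolding smooth_submanifold_def by (rule bspec)
    then show ?thesis using that by (elim exE conjE) 
  qed
  define a where "a = \<phi> p"
  have "a \<in> \<phi> ` (U \<inter> M)" using ch(2) assms(3) unfolding a_def by simp
  then have aVL: "a \<in> V \<inter> L" using ch(11) by simp
  have psiM: "\<psi> b \<in> M" if "b \<in> V" "b \<in> L" for b
  proof -
    have "b \<in> \<phi> ` (U \<inter> M)" using ch(11) that by simp
    then obtain x where "x \<in> U \<inter> M" "b = \<phi> x" by (rule imageE)
    then show ?thesis using ch(9) by auto
  qed
  have "\<not> L \<subseteq> {0}"
  proof
    assume "L \<subseteq> {0}"
    then have "dim L = 0" by (simp only: dim_eq_0)
    then show False using ch(5) assms(2) by simp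
  qed
  then obtain l where l: "l \<in> L" "l \<noteq> 0" by blast
  have psid: "\<psi> differentiable (at a)" using smooth_on_diff[OF ch(7)] aVL by blast
  have phid: "\<phi> differentiable (at p)" using smooth_on_diff[OF ch(6) ch(2)] .
  have pa: "\<psi> a = p" using ch(9) ch(2) unfolding a_def by blast
  have aV: "a \<in> V" and aL: "a \<in> L" using aVL by auto
  obtain c where c: "c > 0" "c *\<^sub>R frechet_derivative \<psi> (at a) l \<in> tangent_space M (\<psi> a)"
    using chart_tangent[OF ch(3,4) aV aL l(1) psid psiM] by blast
  define D1 where "D1 = frechet_derivative \<psi> (at a)"
  define D2 where "D2 = frechet_derivative \<phi> (at p)"
  have d1: "(\<psi> has_derivative D1) (at a)" using psid unfolding D1_def by (simp add: frechet_derivative_works)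
  have d2: "(\<phi> has_derivative D2) (at (\<psi> a))" using phid pa unfolding D2_def by (simp add: frechet_derivative_works)
  have comp: "((\<phi> \<circ> \<psi>) has_derivative (D2 \<circ> D1)) (at a)" using diff_chain_at[OF d1 d2] .
  have idd: "((\<phi> \<circ> \<psi>) has_derivative id) (at a)"
    by (rule has_derivative_transform_within_open[OF has_derivative_id ch(3)]) (use aVL ch(10) in auto)
  have "D2 \<circ> D1 = id" using has_derivative_unique[OF comp idd] .
  then have "D2 (D1 l) = l" by (metis comp_apply id_apply)
  moreover have "linear D2" using d2 has_derivative_linear by blast
  ultimately have "D1 l \<noteq> 0" using l(2) linear_0[of D2] by metis
  then have "c *\<^sub>R D1 l \<noteq> 0" using c(1) by simp
  moreover have "c *\<^sub>R D1 l \<in> tangent_space M p" using c(2) pa unfolding D1_def by simp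
  ultimately show ?thesis by blast
qed

lemma lin_expand:
  fixes D :: "'a::euclidean_space \<Rightarrow> 'b::real_vector"
  assumes "linear D"
  shows "D u = (\<Sum>b\<in>Basis. (u \<bullet> b) *\<^sub>R D b)"
proof -
  have "D u = D (\<Sum>b\<in>Basis. (u \<bullet> b) *\<^sub>R b)" by (simp add: euclidean_representation)
  also have "\<dots> = (\<Sum>b\<in>Basis. D ((u \<bullet> b) *\<^sub>R b))" by (rule linear_sum[OF assms])
  also have "\<dots> = (\<Sum>b\<in>Basis. (u \<bullet> b) *\<^sub>R D b)" using linear_scale[OF assms] by simp
  finally show ?thesis .
qed

lemma sum_basis_bound:
  fixes u :: "'a::euclidean_space" and g :: "'a \<Rightarrow> 'b::real_normed_vector"
  assumes "\<And>b. b \<in> Basis \<Longrightarrow> norm (g b) \<le> C b"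
  shows "norm (\<Sum>b\<in>Basis. (u \<bullet> b) *\<^sub>R g b) \<le> norm u * (\<Sum>b\<in>Basis. C b)"
proof -
  have "norm (\<Sum>b\<in>Basis. (u \<bullet> b) *\<^sub>R g b) \<le> (\<Sum>b\<in>Basis. norm ((u \<bullet> b) *\<^sub>R g b))"
    by (rule norm_sum)
  also have "\<dots> \<le> (\<Sum>b\<in>Basis. norm u * C b)"
  proof (rule sum_mono)
    fix b :: 'a assume b: "b \<in> Basis"
    have "norm ((u \<bullet> b) *\<^sub>R g b) = \<bar>u \<bullet> b\<bar> * norm (g b)" by simp
    also have "\<dots> \<le> norm u * C b"
      by (rule mult_mono'[OF Basis_le_norm[OF b] assms[OF b]]) auto
    finally show "norm ((u \<bullet> b) *\<^sub>R g b) \<le> norm u * C b" .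
  qed
  also have "\<dots> = norm u * (\<Sum>b\<in>Basis. C b)" by (simp add: sum_distrib_left)
  finally show ?thesis .
qed

lemma smooth_iter_bound:
  fixes f :: "'a::euclidean_space \<Rightarrow> 'b::real_normed_vector"
  assumes "smooth_on S f" "compact K" "K \<subseteq> S"
  shows "\<exists>C\<ge>0. \<forall>x\<in>K. norm (iter_dderiv vs f x) \<le> C"
proof -
  have "\<forall>x\<in>K. isCont (iter_dderiv vs f) x"
    using assms(1,3) unfolding smooth_on_def
    by (meson differentiable_imp_continuous_within subsetD)
  then have "continuous_on K (iter_dderiv vs f)" by (rule continuous_at_imp_continuous_on)
  then have "compact (iter_dderiv vs f ` K)" using assms(2) by (rule compact_continuous_image)
  then obtain C where "\<forall>y\<in>iter_dderiv vs f ` K. norm y \<le> C" using compact_imp_bounded bounded_iff by metis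
  then have "\<forall>x\<in>K. norm (iter_dderiv vs f x) \<le> max C 0" by auto
  then show ?thesis by (intro exI[of _ "max C 0"]) auto
qed

lemma smooth_lipschitz:
  fixes f :: "'a::euclidean_space \<Rightarrow> 'b::real_normed_vector"
  assumes "smooth_on S f" "compact K" "convex K" "K \<subseteq> S"
  shows "\<exists>C\<ge>0. \<forall>x\<in>K. \<forall>y\<in>K. norm (f x - f y) \<le> C * norm (x - y)"
proof -
  have "\<forall>b\<in>Basis. \<exists>C\<ge>0. \<forall>x\<in>K. norm (iter_dderiv [b] f x) \<le> C"
    using smooth_iter_bound[OF assms(1,2,4)] by blast
  then obtain Cb where Cb: "\<And>b. b \<in> Basis \<Longrightarrow> Cb b \<ge> 0" "\<And>b x. b \<in> Basis \<Longrightarrow> x \<in> K \<Longrightarrow> norm (iter_dderiv [b] f x) \<le> Cb b"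
    by metis
  define C where "C = (\<Sum>b\<in>Basis. Cb b)"
  have C0: "C \<ge> 0" unfolding C_def using Cb(1) by (simp add: sum_nonneg)
  have der: "(f has_derivative frechet_derivative f (at x)) (at x within K)" if "x \<in> K" for x
  proof -
    have "f differentiable (at x)" using smooth_on_diff[OF assms(1)] assms(4) that by blast
    then show ?thesis by (simp add: frechet_derivative_works has_derivative_at_withinI)
  qed
  have on: "onorm (frechet_derivative f (at x)) \<le> C" if "x \<in> K" for x
  proof (rule onorm_le)
    fix u
    have lin: "linear (frechet_derivative f (at x))"
      using der[OF that] has_derivative_linear by blast
    have "frechet_derivative f (at x) u = (\<Sum>b\<in>Basis. (u \<bullet> b) *\<^sub>R frechet_derivative f (at x) b)"
      by (rule lin_expand[OF lin])
    also have "norm \<dots> \<le> norm u * C" unfolding C_def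
      by (rule sum_basis_bound) (use Cb(2)[OF _ that] in simp)
    finally show "norm (frechet_derivative f (at x) u) \<le> C * norm u" by (simp add: mult.commute)
  qed
  show ?thesis
    using differentiable_bound[OF assms(3) der on] C0 by blast
qed

lemma line_deriv:
  fixes f :: "'a::euclidean_space \<Rightarrow> 'b::real_inner"
  assumes "f differentiable (at (a + t *\<^sub>R u))"
  shows "((\<lambda>t. n \<bullet> f (a + t *\<^sub>R u)) has_real_derivative (n \<bullet> frechet_derivative f (at (a + t *\<^sub>R u)) u)) (at t)"
proof -
  define D where "D = frechet_derivative f (at (a + t *\<^sub>R u))"
  have df: "(f has_derivative D) (at (a + t *\<^sub>R u))" using assms unfolding D_def by (simp add: frechet_derivative_works)
  have lin: "linear D" using df has_derivative_linear by blast
  have dx: "((\<lambda>t. a + t *\<^sub>R u) has_derivative (\<lambda>s. s *\<^sub>R u)) (at t)"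
    by (intro derivative_eq_intros) auto
  have "((f \<circ> (\<lambda>t. a + t *\<^sub>R u)) has_derivative (D \<circ> (\<lambda>s. s *\<^sub>R u))) (at t)"
    by (rule diff_chain_at[OF dx]) (simp add: df)
  then have "((\<lambda>t. n \<bullet> (f \<circ> (\<lambda>t. a + t *\<^sub>R u)) t) has_derivative (\<lambda>s. n \<bullet> (D \<circ> (\<lambda>s. s *\<^sub>R u)) s)) (at t)"
    by (rule has_derivative_inner_right)
  moreover have "(\<lambda>s. n \<bullet> (D \<circ> (\<lambda>s. s *\<^sub>R u)) s) = (\<lambda>s. (n \<bullet> D u) * s)"
    using linear_scale[OF lin] by (auto simp: fun_eq_iff)
  ultimately show ?thesis unfolding has_field_derivative_def D_def by (simp add: o_def)
qed

lemma smooth_taylor2: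
  fixes f :: "'a::euclidean_space \<Rightarrow> 'b::real_inner"
  assumes "smooth_on S f" "compact K" "convex K" "K \<subseteq> S"
  shows "\<exists>C\<ge>0. \<forall>a\<in>K. \<forall>b\<in>K. \<forall>n. \<bar>n \<bullet> (f b - f a - frechet_derivative f (at a) (b - a))\<bar> \<le> C * norm n * (norm (b - a))\<^sup>2"
proof -
  have "\<forall>i\<in>Basis. \<forall>j\<in>Basis. \<exists>C\<ge>0. \<forall>x\<in>K. norm (iter_dderiv [j, i] f x) \<le> C"
    using smooth_iter_bound[OF assms(1,2,4)] by blast
  then obtain Cc where Cc: "\<And>i j. i \<in> Basis \<Longrightarrow> j \<in> Basis \<Longrightarrow> Cc i j \<ge> 0"
    "\<And>i j x. i \<in> Basis \<Longrightarrow> j \<in> Basis \<Longrightarrow> x \<in> K \<Longrightarrow> norm (iter_dderiv [j, i] f x) \<le> Cc i j"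
    by metis
  define C where "C = (\<Sum>i\<in>Basis. \<Sum>j\<in>Basis. Cc i j)"
  have C0: "C \<ge> 0" unfolding C_def using Cc(1) by (simp add: sum_nonneg)
  have main: "\<bar>n \<bullet> (f b - f a - frechet_derivative f (at a) (b - a))\<bar> \<le> C * norm n * (norm (b - a))\<^sup>2"
    if a: "a \<in> K" and b: "b \<in> K" for a b n
  proof -
    define u where "u = b - a"
    define x where "x t = a + t *\<^sub>R u" for t
    define F where "F i = iter_dderiv [i] f" for i
    have Fi: "F i = (\<lambda>y. frechet_derivative f (at y) i)" for i unfolding F_def by simp
    have xK: "x t \<in> K" if "0 \<le> t" "t \<le> 1" for t
    proof -
      have "x t = (1 - t) *\<^sub>R a + t *\<^sub>R b" unfolding x_def u_def by (simp add: algebra_simps)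
      then show ?thesis using convexD_alt[OF assms(3) a b that] by simp
    qed
    have xS: "x t \<in> S" if "0 \<le> t" "t \<le> 1" for t using xK[OF that] assms(4) by blast
    define g where "g t = n \<bullet> f (x t)" for t
    define G1 where "G1 t = (\<Sum>i\<in>Basis. (u \<bullet> i) * (n \<bullet> F i (x t)))" for t
    define G2 where "G2 t = (\<Sum>i\<in>Basis. (u \<bullet> i) * (n \<bullet> frechet_derivative (F i) (at (x t)) u))" for t
    have D1: "(g has_real_derivative G1 t) (at t)" if "0 \<le> t" "t \<le> 1" for t
    proof -
      have fd: "f differentiable (at (x t))" using smooth_on_diff[OF assms(1) xS[OF that]] .
      have lin: "linear (frechet_derivative f (at (x t)))"
        using fd by (simp add: frechet_derivative_works has_derivative_linear)
      have "(g has_real_derivative (n \<bullet> frechet_derivative f (at (x t)) u)) (at t)"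
        using line_deriv[of f a t u n] fd unfolding g_def x_def by simp
      moreover have "n \<bullet> frechet_derivative f (at (x t)) u = G1 t"
        unfolding G1_def Fi lin_expand[OF lin, of u] by (simp add: inner_sum_right)
      ultimately show ?thesis by simp
    qed
    have D2: "(G1 has_real_derivative G2 t) (at t)" if "0 \<le> t" "t \<le> 1" for t
    proof -
      have "((\<lambda>t. (u \<bullet> i) * (n \<bullet> F i (x t))) has_real_derivative ((u \<bullet> i) * (n \<bullet> frechet_derivative (F i) (at (x t)) u))) (at t)"
        if i: "i \<in> Basis" for i
      proof -
        have fd: "F i differentiable (at (x t))"
          using assms(1) xS[OF \<open>0 \<le> t\<close> \<open>t \<le> 1\<close>] unfolding smooth_on_def F_def by blast
        have "((\<lambda>t. n \<bullet> F i (x t)) has_real_derivative (n \<bullet> frechet_derivative (F i) (at (x t)) u)) (at t)"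
          using line_deriv[of "F i" a t u n] fd unfolding x_def by simp
        then show ?thesis by (intro DERIV_cmult)
      qed
      then show ?thesis unfolding G1_def G2_def by (intro DERIV_sum) auto
    qed
    have B2: "\<bar>G2 t\<bar> \<le> C * norm n * (norm u)\<^sup>2" if "0 \<le> t" "t \<le> 1" for t
    proof -
      have w: "norm (n \<bullet> frechet_derivative (F i) (at (x t)) u) \<le> norm n * (norm u * (\<Sum>j\<in>Basis. Cc i j))"
        if i: "i \<in> Basis" for i
      proof -
        have fd: "F i differentiable (at (x t))"
          using assms(1) xS[OF \<open>0 \<le> t\<close> \<open>t \<le> 1\<close>] unfolding smooth_on_def F_def by blast
        have lin: "linear (frechet_derivative (F i) (at (x t)))"
          using fd by (simp add: frechet_derivative_works has_derivative_linear)
        have "norm (frechet_derivative (F i) (at (x t)) u) \<le> norm u * (\<Sum>j\<in>Basis. Cc i j)"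
          unfolding lin_expand[OF lin, of u]
        proof (rule sum_basis_bound)
          fix j :: 'a assume j: "j \<in> Basis"
          have "frechet_derivative (F i) (at (x t)) j = iter_dderiv [j, i] f (x t)" unfolding F_def by simp
          then show "norm (frechet_derivative (F i) (at (x t)) j) \<le> Cc i j"
            using Cc(2)[OF i j xK[OF \<open>0 \<le> t\<close> \<open>t \<le> 1\<close>]] by simp
        qed
        then show ?thesis
          using Cauchy_Schwarz_ineq2[of n "frechet_derivative (F i) (at (x t)) u"]
          by (simp add: order_trans mult_left_mono)
      qed
      have "\<bar>G2 t\<bar> = norm (\<Sum>i\<in>Basis. (u \<bullet> i) *\<^sub>R (n \<bullet> frechet_derivative (F i) (at (x t)) u))"
        unfolding G2_def by simp
      also have "\<dots> \<le> norm u * (\<Sum>i\<in>Basis. norm n * (norm u * (\<Sum>j\<in>Basis. Cc i j)))"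
        by (rule sum_basis_bound) (use w in blast)
      also have "\<dots> = C * norm n * (norm u)\<^sup>2"
        unfolding C_def by (simp add: sum_distrib_left power2_eq_square mult_ac)
      finally show ?thesis .
    qed
    obtain \<xi> where xi: "0 < \<xi>" "\<xi> < 1" "g 1 - g 0 = (1 - 0) * G1 \<xi>"
      using MVT2[of 0 1 g G1] D1 by auto
    obtain \<eta> where eta: "0 < \<eta>" "\<eta> < \<xi>" "G1 \<xi> - G1 0 = (\<xi> - 0) * G2 \<eta>"
      using MVT2[of 0 \<xi> G1 G2] D2 xi by auto
    have "\<bar>g 1 - g 0 - G1 0\<bar> = \<xi> * \<bar>G2 \<eta>\<bar>" using xi eta by (simp add: abs_mult)
    also have "\<dots> \<le> 1 * \<bar>G2 \<eta>\<bar>" using xi by (intro mult_right_mono) auto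
    also have "\<dots> \<le> C * norm n * (norm u)\<^sup>2" using B2[of \<eta>] eta xi by simp
    finally have *: "\<bar>g 1 - g 0 - G1 0\<bar> \<le> C * norm n * (norm u)\<^sup>2" .
    have fa: "f differentiable (at a)" using smooth_on_diff[OF assms(1)] a assms(4) by blast
    have lin: "linear (frechet_derivative f (at a))"
      using fa by (simp add: frechet_derivative_works has_derivative_linear)
    have "G1 0 = n \<bullet> frechet_derivative f (at a) u"
      unfolding G1_def Fi x_def lin_expand[OF lin, of u] by (simp add: inner_sum_right)
    moreover have "g 1 = n \<bullet> f b" "g 0 = n \<bullet> f a" unfolding g_def x_def u_def by simp_all
    ultimately show ?thesis using * unfolding u_def by (simp add: inner_diff_right)
  qed
  show ?thesis using main C0 by blast
qed

lemma chart_exists: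
  fixes M :: "'a::euclidean_space set"
  assumes "smooth_submanifold M m" "p \<in> M"
  obtains U V and \<phi> \<psi> :: "'a \<Rightarrow> 'a" and L where "open U" "p \<in> U" "open V" "subspace L" "dim L = m"
    "smooth_on U \<phi>" "smooth_on V \<psi>" "\<phi> ` U = V" "\<forall>x\<in>U. \<psi> (\<phi> x) = x" "\<forall>y\<in>V. \<phi> (\<psi> y) = y"
    "\<phi> ` (U \<inter> M) = V \<inter> L"
proof -
  have "\<exists>U V (\<phi>::'a \<Rightarrow> 'a) (\<psi>::'a \<Rightarrow> 'a) L.
      open U \<and> p \<in> U \<and> open V \<and> subspace L \<and> dim L = m \<and>
      smooth_on U \<phi> \<and> smooth_on V \<psi> \<and>
      \<phi> ` U = V \<and> (\<forall>x\<in>U. \<psi> (\<phi> x) = x) \<and> (\<forall>y\<in>V. \<phi> (\<psi> y) = y) \<and>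
      \<phi> ` (U \<inter> M) = V \<inter> L"
    using assms(1,2) unfolding smooth_submanifold_def by (rule bspec)
  then show ?thesis using that by (elim exE conjE)
qed

lemma local_normal_bound:
  fixes M :: "'a::euclidean_space set"
  assumes "smooth_submanifold M m" "p \<in> M"
  shows "\<exists>\<delta>>0. \<exists>K\<ge>0. \<forall>p'\<in>M. \<forall>q\<in>M. p' \<in> ball p \<delta> \<longrightarrow> q \<in> ball p \<delta> \<longrightarrow>
           (\<forall>n. (\<forall>v\<in>tangent_space M p'. n \<bullet> v = 0) \<longrightarrow> \<bar>n \<bullet> (q - p')\<bar> \<le> K * norm n * (norm (q - p'))\<^sup>2)"
proof -
  obtain U V and \<phi> \<psi> :: "'a \<Rightarrow> 'a" and L where ch: "open U" "p \<in> U" "open V" "subspace L" "dim L = m"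
    "smooth_on U \<phi>" "smooth_on V \<psi>" "\<phi> ` U = V" "\<forall>x\<in>U. \<psi> (\<phi> x) = x" "\<forall>y\<in>V. \<phi> (\<psi> y) = y"
    "\<phi> ` (U \<inter> M) = V \<inter> L"
    by (rule chart_exists[OF assms])
  define a0 where "a0 = \<phi> p"
  have a0V: "a0 \<in> V" using ch(2,8) unfolding a0_def by blast
  obtain r where r: "r > 0" "cball a0 r \<subseteq> V" using ch(3) a0V open_contains_cball by blast
  obtain C2 where C2: "C2 \<ge> 0" "\<And>a b n. a \<in> cball a0 r \<Longrightarrow> b \<in> cball a0 r \<Longrightarrow>
      \<bar>n \<bullet> (\<psi> b - \<psi> a - frechet_derivative \<psi> (at a) (b - a))\<bar> \<le> C2 * norm n * (norm (b - a))\<^sup>2"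
    using smooth_taylor2[OF ch(7) compact_cball convex_cball r(2)] by blast
  have cp: "isCont \<phi> p" using smooth_on_diff[OF ch(6) ch(2)] by (rule differentiable_imp_continuous_within)
  obtain \<delta>1 where d1': "\<delta>1 > 0" "\<forall>x. dist x p < \<delta>1 \<longrightarrow> dist (\<phi> x) (\<phi> p) < r"
    using cp[unfolded continuous_at_eps_delta, rule_format, OF r(1)] by blast
  have d1: "\<delta>1 > 0" "\<And>x. dist x p < \<delta>1 \<Longrightarrow> dist (\<phi> x) a0 < r" using d1' unfolding a0_def by auto
  obtain \<delta>2 where d2: "\<delta>2 > 0" "cball p \<delta>2 \<subseteq> U" using ch(1,2) open_contains_cball by blast
  define \<delta> where "\<delta> = min \<delta>1 \<delta>2"
  have dpos: "\<delta> > 0" unfolding \<delta>_def using d1(1) d2(1) by simp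
  have cbU: "cball p \<delta> \<subseteq> U" using d2(2) unfolding \<delta>_def by auto
  obtain Lp where Lp: "Lp \<ge> 0" "\<And>x y. x \<in> cball p \<delta> \<Longrightarrow> y \<in> cball p \<delta> \<Longrightarrow> norm (\<phi> x - \<phi> y) \<le> Lp * norm (x - y)"
    using smooth_lipschitz[OF ch(6) compact_cball convex_cball cbU] by blast
  have psiM: "\<psi> b \<in> M" if "b \<in> V" "b \<in> L" for b
  proof -
    have "b \<in> \<phi> ` (U \<inter> M)" using ch(11) that by simp
    then obtain x where "x \<in> U \<inter> M" "b = \<phi> x" by (rule imageE)
    then show ?thesis using ch(9) by auto
  qed
  have main: "\<bar>n \<bullet> (q - p')\<bar> \<le> (C2 * Lp\<^sup>2) * norm n * (norm (q - p'))\<^sup>2"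
    if p': "p' \<in> M" "p' \<in> ball p \<delta>" and q: "q \<in> M" "q \<in> ball p \<delta>"
      and nn: "\<forall>v\<in>tangent_space M p'. n \<bullet> v = 0" for p' q n
  proof -
    define a where "a = \<phi> p'"
    define b where "b = \<phi> q"
    have p'U: "p' \<in> U" and qU: "q \<in> U" using p'(2) q(2) cbU by auto
    have "a \<in> \<phi> ` (U \<inter> M)" using p'U p'(1) unfolding a_def by simp
    then have aVL: "a \<in> V" "a \<in> L" using ch(11) by auto
    have "b \<in> \<phi> ` (U \<inter> M)" using qU q(1) unfolding b_def by simp
    then have bVL: "b \<in> V" "b \<in> L" using ch(11) by auto
    have "dist p p' < \<delta>" "dist p q < \<delta>" using p'(2) q(2) by auto
    then have "dist p' p < \<delta>1" "dist q p < \<delta>1" unfolding \<delta>_def by (auto simp: dist_commute)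
    then have "dist (\<phi> p') a0 < r" "dist (\<phi> q) a0 < r" using d1(2) by auto
    then have ac: "a \<in> cball a0 r" and bc: "b \<in> cball a0 r" unfolding a_def b_def mem_cball
      by (auto simp: dist_commute)
    have pa: "\<psi> a = p'" "\<psi> b = q" using ch(9) p'U qU unfolding a_def b_def by auto
    have bmaL: "b - a \<in> L" using bVL(2) aVL(2) ch(4) by (simp add: subspace_diff)
    obtain c where c: "c > 0" "c *\<^sub>R frechet_derivative \<psi> (at a) (b - a) \<in> tangent_space M (\<psi> a)"
      using chart_tangent[OF ch(3,4) aVL bmaL smooth_on_diff[OF ch(7) aVL(1)] psiM] by blast
    have "c *\<^sub>R frechet_derivative \<psi> (at a) (b - a) \<in> tangent_space M p'" using c(2) pa(1) by simp
    then have "n \<bullet> (c *\<^sub>R frechet_derivative \<psi> (at a) (b - a)) = 0" using nn by blast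
    then have n0: "n \<bullet> frechet_derivative \<psi> (at a) (b - a) = 0" using c(1) by simp
    have "\<bar>n \<bullet> (q - p')\<bar> = \<bar>n \<bullet> (\<psi> b - \<psi> a - frechet_derivative \<psi> (at a) (b - a))\<bar>"
      using n0 pa by (simp add: inner_diff_right)
    also have "\<dots> \<le> C2 * norm n * (norm (b - a))\<^sup>2" by (rule C2(2)[OF ac bc])
    also have "\<dots> \<le> C2 * norm n * (Lp * norm (q - p'))\<^sup>2"
    proof -
      have "q \<in> cball p \<delta>" "p' \<in> cball p \<delta>" using p'(2) q(2) ball_subset_cball by blast+
      then have "norm (b - a) \<le> Lp * norm (q - p')"
        using Lp(2)[of q p'] unfolding a_def b_def by blast
      then have "(norm (b - a))\<^sup>2 \<le> (Lp * norm (q - p'))\<^sup>2" by (intro power_mono) auto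
      then show ?thesis using C2(1) by (intro mult_left_mono) auto
    qed
    also have "\<dots> = (C2 * Lp\<^sup>2) * norm n * (norm (q - p'))\<^sup>2" by (simp add: power_mult_distrib)
    finally show ?thesis .
  qed
  have K0: "C2 * Lp\<^sup>2 \<ge> 0" using C2(1) by simp
  have "\<forall>p'\<in>M. \<forall>q\<in>M. p' \<in> ball p \<delta> \<longrightarrow> q \<in> ball p \<delta> \<longrightarrow>
           (\<forall>n. (\<forall>v\<in>tangent_space M p'. n \<bullet> v = 0) \<longrightarrow> \<bar>n \<bullet> (q - p')\<bar> \<le> (C2 * Lp\<^sup>2) * norm n * (norm (q - p'))\<^sup>2)"
  proof (intro ballI impI allI)
    fix p' q n assume "p' \<in> M" "q \<in> M" "p' \<in> ball p \<delta>" "q \<in> ball p \<delta>" "\<forall>v\<in>tangent_space M p'. n \<bullet> v = 0"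
    then show "\<bar>n \<bullet> (q - p')\<bar> \<le> (C2 * Lp\<^sup>2) * norm n * (norm (q - p'))\<^sup>2" by (intro main)
  qed
  then show ?thesis using dpos K0 by blast
qed

lemma global_normal_bound:
  fixes M :: "'a::euclidean_space set"
  assumes "smooth_submanifold M m" "compact M"
  shows "\<exists>K\<ge>0. \<forall>p\<in>M. \<forall>q\<in>M. \<forall>n. (\<forall>v\<in>tangent_space M p. n \<bullet> v = 0) \<longrightarrow>
            \<bar>n \<bullet> (q - p)\<bar> \<le> K * norm n * (norm (q - p))\<^sup>2"
proof -
  have "\<forall>p\<in>M. \<exists>\<delta>>0. \<exists>K\<ge>0. \<forall>p'\<in>M. \<forall>q\<in>M. p' \<in> ball p \<delta> \<longrightarrow> q \<in> ball p \<delta> \<longrightarrow>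
           (\<forall>n. (\<forall>v\<in>tangent_space M p'. n \<bullet> v = 0) \<longrightarrow> \<bar>n \<bullet> (q - p')\<bar> \<le> K * norm n * (norm (q - p'))\<^sup>2)"
    using local_normal_bound[OF assms(1)] by blast
  then obtain dd KK where dK: "\<And>p. p \<in> M \<Longrightarrow> dd p > 0" "\<And>p. p \<in> M \<Longrightarrow> KK p \<ge> 0"
    "\<And>p p' q n. p \<in> M \<Longrightarrow> p' \<in> M \<Longrightarrow> q \<in> M \<Longrightarrow> p' \<in> ball p (dd p) \<Longrightarrow> q \<in> ball p (dd p) \<Longrightarrow>
        (\<forall>v\<in>tangent_space M p'. n \<bullet> v = 0) \<Longrightarrow> \<bar>n \<bullet> (q - p')\<bar> \<le> KK p * norm n * (norm (q - p'))\<^sup>2"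
    by metis
  have cov: "M \<subseteq> (\<Union>p\<in>M. ball p (dd p))" using dK(1) by force
  obtain F where F: "F \<subseteq> M" "finite F" "M \<subseteq> (\<Union>p\<in>F. ball p (dd p))"
    using compactE_image[OF assms(2) _ cov] by blast
  obtain e where e: "e > 0" "\<And>x. x \<in> M \<Longrightarrow> \<exists>G \<in> (\<lambda>p. ball p (dd p)) ` F. ball x e \<subseteq> G"
    using Heine_Borel_lemma[OF assms(2), of "(\<lambda>p. ball p (dd p)) ` F"] F(3) by auto
  define K where "K = (\<Sum>p\<in>F. KK p) + 1 / e"
  have SK: "KK p0 \<le> (\<Sum>p\<in>F. KK p)" if "p0 \<in> F" for p0
    using member_le_sum[of p0 F KK] that F dK(2) by auto
  have K0: "K \<ge> 0" unfolding K_def using dK(2) F(1) e(1) by (auto intro!: add_nonneg_nonneg sum_nonneg)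
  have main: "\<bar>n \<bullet> (q - p')\<bar> \<le> K * norm n * (norm (q - p'))\<^sup>2"
    if p': "p' \<in> M" and q: "q \<in> M" and nn: "\<forall>v\<in>tangent_space M p'. n \<bullet> v = 0" for p' q n
  proof (cases "norm (q - p') < e")
    case True
    obtain p0 where p0: "p0 \<in> F" "ball p' e \<subseteq> ball p0 (dd p0)" using e(2)[OF p'] by blast
    have "p' \<in> ball p' e" using e(1) by simp
    then have "p' \<in> ball p0 (dd p0)" using p0(2) by blast
    moreover have "q \<in> ball p' e" using True by (simp add: dist_norm norm_minus_commute)
    then have "q \<in> ball p0 (dd p0)" using p0(2) by blast
    ultimately have "\<bar>n \<bullet> (q - p')\<bar> \<le> KK p0 * norm n * (norm (q - p'))\<^sup>2"
      using dK(3)[OF _ p' q _ _ nn] p0(1) F(1) by blast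
    also have "\<dots> \<le> K * norm n * (norm (q - p'))\<^sup>2"
    proof -
      have "0 \<le> 1 / e" using e(1) by simp
      then have "KK p0 \<le> K" using SK[OF p0(1)] unfolding K_def by linarith
      then show ?thesis by (intro mult_right_mono) auto
    qed
    finally show ?thesis .
  next
    case False
    have "\<bar>n \<bullet> (q - p')\<bar> \<le> norm n * norm (q - p')" by (rule Cauchy_Schwarz_ineq2)
    also have "\<dots> \<le> norm n * ((1 / e) * (norm (q - p'))\<^sup>2)"
    proof (rule mult_left_mono)
      have "norm (q - p') * e \<le> norm (q - p') * norm (q - p')" using False e(1) by (intro mult_left_mono) auto
      then show "norm (q - p') \<le> (1 / e) * (norm (q - p'))\<^sup>2"
        using e(1) by (simp add: power2_eq_square field_simps)
    qed simp
    also have "\<dots> \<le> norm n * (K * (norm (q - p'))\<^sup>2)"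
      using dK(2) F(1) unfolding K_def
      by (intro mult_left_mono mult_right_mono) (auto intro!: sum_nonneg)
    finally show ?thesis by (simp add: mult_ac)
  qed
  show ?thesis using main K0 by blast
qed

lemma nearest_exists:
  fixes M :: "'a::euclidean_space set"
  assumes "closed M" "M \<noteq> {}"
  shows "\<exists>p\<in>M. dist x p = infdist x M"
proof -
  obtain p where p: "p \<in> M" "\<And>q. q \<in> M \<Longrightarrow> dist x p \<le> dist x q"
    using distance_attains_inf[OF assms] by blast
  have "infdist x M \<le> dist x p" by (rule infdist_le[OF p(1)])
  moreover have "dist x p \<le> infdist x M"
    unfolding infdist_notempty[OF assms(2)] by (rule cINF_greatest[OF assms(2) p(2)])
  ultimately show ?thesis using p(1) by force
qed

lemma nearest_is_min:
  assumes "dist x p = infdist x M" "q \<in> M"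
  shows "dist x p \<le> dist x q"
  using infdist_le[OF assms(2), of x] assms(1) by simp

lemma positive_reach:
  fixes M :: "'a::euclidean_space set"
  assumes "smooth_submanifold M m" "compact M" "M \<noteq> {}"
  shows "\<exists>r>0. \<forall>x. infdist x M < r \<longrightarrow> (\<exists>!p. p \<in> M \<and> dist x p = infdist x M)"
proof -
  obtain K where K: "K \<ge> 0" "\<And>p q n. p \<in> M \<Longrightarrow> q \<in> M \<Longrightarrow> (\<forall>v\<in>tangent_space M p. n \<bullet> v = 0) \<Longrightarrow>
            \<bar>n \<bullet> (q - p)\<bar> \<le> K * norm n * (norm (q - p))\<^sup>2"
    using global_normal_bound[OF assms(1,2)] by blast
  define r where "r = 1 / (2 * K + 1)"
  have r0: "r > 0" unfolding r_def using K(1) by simp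
  have Kr: "2 * K * r < 1" unfolding r_def using K(1) by (simp add: field_simps)
  have uniq: "p = q" if x: "infdist x M < r" and p: "p \<in> M" "dist x p = infdist x M"
    and q: "q \<in> M" "dist x q = infdist x M" for x p q
  proof (rule ccontr)
    assume pq: "p \<noteq> q"
    have nn: "\<forall>v\<in>tangent_space M p. (x - p) \<bullet> v = 0"
      using nearest_normal[OF p(1) nearest_is_min[OF p(2)]] by blast
    have b: "\<bar>(x - p) \<bullet> (q - p)\<bar> \<le> K * norm (x - p) * (norm (q - p))\<^sup>2" by (rule K(2)[OF p(1) q(1) nn])
    have eq: "norm (x - q) = norm (x - p)" using p(2) q(2) by (simp add: dist_norm)
    have "(norm (x - q))\<^sup>2 = (norm (x - p))\<^sup>2 - 2 * ((x - p) \<bullet> (q - p)) + (norm (q - p))\<^sup>2"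
    proof -
      have "x - q = (x - p) - (q - p)" by simp
      then show ?thesis by (simp only: power2_norm_eq_inner inner_diff_left inner_diff_right inner_commute) (simp add: inner_commute)
    qed
    then have e2: "(norm (q - p))\<^sup>2 = 2 * ((x - p) \<bullet> (q - p))" using eq by simp
    have np: "norm (x - p) < r" using p(2) x by (simp add: dist_norm)
    have pos: "(norm (q - p))\<^sup>2 > 0" using pq by simp
    have "(norm (q - p))\<^sup>2 \<le> 2 * (K * norm (x - p) * (norm (q - p))\<^sup>2)" using e2 b by linarith
    also have "\<dots> \<le> (2 * K * r) * (norm (q - p))\<^sup>2"
      using np K(1) pos by (simp add: mult_right_mono mult_left_mono mult.assoc)
    also have "\<dots> < 1 * (norm (q - p))\<^sup>2" using Kr pos by (intro mult_strict_right_mono) auto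
    finally show False by simp
  qed
  have "\<forall>x. infdist x M < r \<longrightarrow> (\<exists>!p. p \<in> M \<and> dist x p = infdist x M)"
  proof (intro allI impI)
    fix x assume x: "infdist x M < r"
    obtain p where "p \<in> M" "dist x p = infdist x M"
      using nearest_exists[OF compact_imp_closed[OF assms(2)] assms(3)] by blast
    then show "\<exists>!p. p \<in> M \<and> dist x p = infdist x M" using uniq[OF x] by blast
  qed
  then show ?thesis using r0 by blast
qed

lemma reach_unique:
  fixes M :: "'a::euclidean_space set"
  assumes "smooth_submanifold M m" "compact M" "M \<noteq> {}" "reach M = R" "infdist y M < R"
  shows "\<exists>!p. p \<in> M \<and> dist y p = infdist y M"
proof -
  define S where "S = {r. r > 0 \<and> (\<forall>x. infdist x M < r \<longrightarrow> (\<exists>!p. p \<in> M \<and> dist x p = infdist x M))}"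
  have RS: "R = Sup S" using assms(4) unfolding reach_def S_def by simp
  obtain r0 where "r0 \<in> S" using positive_reach[OF assms(1,2,3)] unfolding S_def by blast
  then have Sne: "S \<noteq> {}" by blast
  have "\<exists>r\<in>S. infdist y M < r"
  proof (cases "bdd_above S")
    case True
    then show ?thesis using less_cSup_iff[OF Sne True] assms(5) RS by blast
  next
    case False
    then show ?thesis unfolding bdd_above_def by (meson not_le)
  qed
  then show ?thesis unfolding S_def by blast
qed

lemma hyperplane_null:
  fixes v :: "'a::euclidean_space"
  assumes "v \<noteq> 0"
  shows "{z. v \<bullet> z = c} \<in> null_sets lborel"
proof -
  have "negligible {z. v \<bullet> z = c}" using negligible_hyperplane assms by blast
  then have "{z. v \<bullet> z = c} \<in> null_sets lebesgue" by (simp add: negligible_iff_null_sets)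
  moreover have "{z. v \<bullet> z = c} \<in> sets lborel" using closed_hyperplane by simp
  ultimately show ?thesis using null_sets_completion_iff by blast
qed

lemma distributed_null:
  fixes Y :: "'w \<Rightarrow> 'a::euclidean_space"
  assumes "distributed P lborel Y g" "H \<in> null_sets lborel"
  shows "emeasure (distr P borel Y) H = 0"
proof -
  have d: "distr P lborel Y = density lborel g" "g \<in> borel_measurable lborel" "Y \<in> measurable P lborel"
    using assms(1) unfolding distributed_def by auto
  have Hs: "H \<in> sets lborel" using assms(2) by auto
  have Yb: "Y \<in> measurable P borel" using d(3) by simp
  have "emeasure (distr P borel Y) H = emeasure P (Y -` H \<inter> space P)"
    using Hs by (intro emeasure_distr[OF Yb]) simp
  also have "\<dots> = emeasure (distr P lborel Y) H" using Hs by (intro emeasure_distr[symmetric, OF d(3)]) simp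
  also have "\<dots> = emeasure (density lborel g) H" using d(1) by simp
  also have "\<dots> = 0"
  proof -
    have "AE x in lborel. x \<in> H \<longrightarrow> g x = 0"
      by (rule AE_I'[OF assms(2)]) auto
    then have "H \<in> null_sets (density lborel g)" using null_sets_density_iff[OF d(2)] Hs by blast
    then show ?thesis by auto
  qed
  finally show ?thesis .
qed

lemma prob_part:
  fixes X X' Z Z' :: "'w \<Rightarrow> 'a::euclidean_space" and E :: "('a \<times> 'a) set"
  assumes P: "prob_space P"
    and rv: "X \<in> borel_measurable P" "X' \<in> borel_measurable P" "Z \<in> borel_measurable P" "Z' \<in> borel_measurable P"
    and Ed: "E \<in> sets borel"
    and sec: "\<And>y x'. \<exists>v c. v \<noteq> 0 \<and> {z'. (y, x' + z') \<in> E} \<subseteq> {z'. v \<bullet> z' = c}"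
    and noise: "distributed P lborel Z' g"
    and ind1: "prob_space.indep_var P borel Z borel Z'"
    and ind2: "prob_space.indep_var P borel (\<lambda>\<omega>. (Z \<omega>, Z' \<omega>)) borel (\<lambda>\<omega>. (X \<omega>, X' \<omega>))"
  shows "{\<omega>\<in>space P. (X \<omega> + Z \<omega>, X' \<omega> + Z' \<omega>) \<in> E} \<in> null_sets P"
proof -
  interpret prob_space P by (rule P)
  define T where "T \<omega> = ((Z \<omega>, Z' \<omega>), (X \<omega>, X' \<omega>))" for \<omega>
  define fS :: "('a \<times> 'a) \<times> ('a \<times> 'a) \<Rightarrow> 'a \<times> 'a"
    where "fS w = (fst (snd w) + fst (fst w), snd (snd w) + snd (fst w))" for w
  define SS where "SS = fS -` E"
  have fSm: "fS \<in> borel_measurable borel" unfolding fS_def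
    by (intro borel_measurable_continuous_onI continuous_intros)
  have SSs: "SS \<in> sets borel" using measurable_sets[OF fSm Ed] unfolding SS_def by simp
  have Tm: "T \<in> borel_measurable P" unfolding T_def using rv by measurable
  have ZZm: "(\<lambda>\<omega>. (Z \<omega>, Z' \<omega>)) \<in> borel_measurable P" using rv by measurable
  have XXm: "(\<lambda>\<omega>. (X \<omega>, X' \<omega>)) \<in> borel_measurable P" using rv by measurable
  define DZZ where "DZZ = distr P borel (\<lambda>\<omega>. (Z \<omega>, Z' \<omega>))"
  define DXX where "DXX = distr P borel (\<lambda>\<omega>. (X \<omega>, X' \<omega>))"
  define DZ where "DZ = distr P borel Z"
  define DZ' where "DZ' = distr P borel Z'"
  have pZZ: "prob_space DZZ" unfolding DZZ_def using ZZm by (rule prob_space_distr)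
  have pXX: "prob_space DXX" unfolding DXX_def using XXm by (rule prob_space_distr)
  have pZ: "prob_space DZ" unfolding DZ_def using rv(3) by (rule prob_space_distr)
  have pZ': "prob_space DZ'" unfolding DZ'_def using rv(4) by (rule prob_space_distr)
  have j2: "DZZ \<Otimes>\<^sub>M DXX = distr P borel T"
    using ind2 unfolding indep_var_distribution_eq DZZ_def DXX_def T_def borel_prod by simp
  have j1: "DZ \<Otimes>\<^sub>M DZ' = DZZ"
    using ind1 unfolding indep_var_distribution_eq DZ_def DZ'_def DZZ_def borel_prod by simp
  have eqset: "{\<omega>\<in>space P. (X \<omega> + Z \<omega>, X' \<omega> + Z' \<omega>) \<in> E} = T -` SS \<inter> space P"
    unfolding SS_def T_def fS_def by auto
  have sets_ok: "T -` SS \<inter> space P \<in> sets P" using measurable_sets[OF Tm SSs] .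
  have "emeasure P (T -` SS \<inter> space P) = emeasure (distr P borel T) SS"
    by (rule emeasure_distr[symmetric, OF Tm SSs])
  also have "\<dots> = emeasure (DZZ \<Otimes>\<^sub>M DXX) SS" using j2 by simp
  also have "\<dots> = (\<integral>\<^sup>+w. emeasure DZZ ((\<lambda>v. (v, w)) -` SS) \<partial>DXX)"
  proof -
    have "pair_sigma_finite DZZ DXX"
      unfolding pair_sigma_finite_def using pZZ pXX prob_space_imp_sigma_finite by blast
    moreover have "SS \<in> sets (DZZ \<Otimes>\<^sub>M DXX)" unfolding j2 using SSs by simp
    ultimately show ?thesis by (rule pair_sigma_finite.emeasure_pair_measure_alt2)
  qed
  also have "\<dots> = (\<integral>\<^sup>+w. 0 \<partial>DXX)"
  proof (rule nn_integral_cong)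
    fix w :: "'a \<times> 'a"
    define A where "A = (\<lambda>v. (v, w)) -` SS"
    have Aeq: "A = (\<lambda>v. (fst w + fst v, snd w + snd v)) -` E" unfolding A_def SS_def fS_def by auto
    have fwm: "(\<lambda>v::'a \<times> 'a. (fst w + fst v, snd w + snd v)) \<in> borel_measurable borel"
      by (intro borel_measurable_continuous_onI continuous_intros)
    have As: "A \<in> sets borel" using measurable_sets[OF fwm Ed] unfolding Aeq by simp
    have sfZ': "sigma_finite_measure DZ'" using pZ' prob_space_imp_sigma_finite by blast
    have "emeasure DZZ A = emeasure (DZ \<Otimes>\<^sub>M DZ') A" using j1 by simp
    also have "\<dots> = (\<integral>\<^sup>+z. emeasure DZ' (Pair z -` A) \<partial>DZ)"
    proof -
      have "A \<in> sets (DZ \<Otimes>\<^sub>M DZ')" unfolding j1 DZZ_def using As by simp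
      then show ?thesis by (rule sigma_finite_measure.emeasure_pair_measure_alt[OF sfZ'])
    qed
    also have "\<dots> = (\<integral>\<^sup>+z. 0 \<partial>DZ)"
    proof (rule nn_integral_cong)
      fix z :: 'a
      obtain v c where vc: "v \<noteq> 0" "{z'. (fst w + z, snd w + z') \<in> E} \<subseteq> {z'. v \<bullet> z' = c}"
        using sec by blast
      have sub: "Pair z -` A \<subseteq> {z'. v \<bullet> z' = c}" using vc(2) unfolding Aeq by auto
      have Hn: "emeasure DZ' {z'. v \<bullet> z' = c} = 0"
        unfolding DZ'_def by (rule distributed_null[OF noise hyperplane_null[OF vc(1)]])
      have Hs: "{z'. v \<bullet> z' = c} \<in> sets DZ'" unfolding DZ'_def using closed_hyperplane by simp
      have "emeasure DZ' (Pair z -` A) \<le> emeasure DZ' {z'. v \<bullet> z' = c}"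
        by (rule emeasure_mono[OF sub Hs])
      then show "emeasure DZ' (Pair z -` A) = 0" using Hn by simp
    qed
    finally show "emeasure DZZ ((\<lambda>v. (v, w)) -` SS) = 0" unfolding A_def by simp
  qed
  also have "\<dots> = 0" by simp
  finally have "emeasure P (T -` SS \<inter> space P) = 0" .
  then have "T -` SS \<inter> space P \<in> null_sets P" using sets_ok by (simp add: null_sets_def)
  then show ?thesis using eqset by simp
qed

theorem lemma3p1:
  fixes M :: "(real^'d) set" and m :: nat and R \<epsilon> \<tau> \<eta> :: real
    and \<mu> :: "(real^'d) measure" and f :: "real^'d \<Rightarrow> ennreal"
    and P :: "'w measure" and X X' Z Z' :: "'w \<Rightarrow> real^'d"
  assumes manifold: "smooth_submanifold M m" "compact M" "connected M" "M \<noteq> {}"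
    and dims: "1 \<le> m" "m < CARD('d)"
    and reach: "reach M = R" "R > 0"
    and params: "\<tau> > 0" "\<eta> > 0" "0 < \<epsilon>" "\<epsilon> \<le> min 1 (R / 2)"
    and mu: "prob_space \<mu>" "f \<in> borel_measurable borel"
            "\<mu> = density (hausdorff_measure m) (\<lambda>x. f x * indicator M x)"
    and P: "prob_space P"
    and rv: "X \<in> borel_measurable P" "X' \<in> borel_measurable P"
            "Z \<in> borel_measurable P" "Z' \<in> borel_measurable P"
    and natural: "distr P borel X = \<mu>" "distr P borel X' = \<mu>"
    and same_or_indep: "(\<forall>\<omega>\<in>space P. X' \<omega> = X \<omega>) \<or> prob_space.indep_var P borel X borel X'"
    and noise: "distributed P lborel Z (\<lambda>z. ennreal (gauss_density (\<eta> powr (1 / real CARD('d)) * \<epsilon> powr (\<tau> + 1)) z))"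
               "distributed P lborel Z' (\<lambda>z. ennreal (gauss_density (\<eta> powr (1 / real CARD('d)) * \<epsilon> powr (\<tau> + 1)) z))"
    and indep: "prob_space.indep_var P borel Z borel Z'"
               "prob_space.indep_var P borel (\<lambda>\<omega>. (Z \<omega>, Z' \<omega>)) borel (\<lambda>\<omega>. (X \<omega>, X' \<omega>))"
  shows "AE \<omega> in P.
           (X \<omega> + Z \<omega> \<in> normal_tube M (\<epsilon> powr (\<tau> + 1)) \<and>
            X' \<omega> + Z' \<omega> \<in> normal_tube M (\<epsilon> powr (\<tau> + 1)) \<and>
            X \<omega> + Z \<omega> \<noteq> X' \<omega> + Z' \<omega>)
           \<longrightarrow> proj_onto M (X \<omega> + Z \<omega>) \<noteq> proj_onto M (X' \<omega> + Z' \<omega>)"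
proof -
  define r where "r = \<epsilon> powr (\<tau> + 1)"
  have "\<epsilon> \<le> 1" "\<epsilon> \<le> R / 2" using params(4) by auto
  then have rR: "r < R" unfolding r_def using powr_le_one_le[OF params(3) \<open>\<epsilon> \<le> 1\<close>, of "\<tau> + 1"] params(1) reach(2)
    by linarith
  have tube: "infdist y M < R" if yt: "y \<in> normal_tube M r" for y
  proof -
    obtain x h where xh: "y = x + h" "x \<in> M" "norm h < r" using yt unfolding normal_tube_def by blast
    have "infdist y M \<le> dist y x" by (rule infdist_le[OF xh(2)])
    also have "\<dots> = norm h" unfolding xh(1) by (simp add: dist_norm)
    finally show ?thesis using xh(3) rR by linarith
  qed
  have uniq: "\<exists>!p. p \<in> M \<and> dist y p = infdist y M" if "infdist y M < R" for y
    using reach_unique[OF manifold(1,2,4) reach(1) that] .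
  have proj: "proj_onto M y \<in> M \<and> dist y (proj_onto M y) = infdist y M" if "infdist y M < R" for y
    unfolding proj_onto_def by (rule theI'[OF uniq[OF that]])
  define E where "E = {z :: (real^'d) \<times> (real^'d). infdist (fst z) M < R \<and>
      (\<exists>p\<in>M. dist (fst z) p = infdist (fst z) M \<and> dist (snd z) p = infdist (snd z) M)}"
  have Eb: "E \<in> sets borel"
  proof -
    define T0 where "T0 = {w :: (real^'d) \<times> ((real^'d) \<times> (real^'d)).
        dist (fst (snd w)) (fst w) = infdist (fst (snd w)) M \<and> dist (snd (snd w)) (fst w) = infdist (snd (snd w)) M}"
    have "closed T0" unfolding T0_def
      by (intro closed_Collect_conj closed_Collect_eq continuous_intros)
    then have G: "closed {z. \<exists>x. x \<in> M \<and> (x, z) \<in> T0}"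
      by (rule closed_compact_projection[OF manifold(2)])
    have O: "open {z :: (real^'d) \<times> (real^'d). infdist (fst z) M < R}"
      by (intro open_Collect_less continuous_intros)
    have "E = {z. infdist (fst z) M < R} \<inter> {z. \<exists>x. x \<in> M \<and> (x, z) \<in> T0}"
      unfolding E_def T0_def by (auto simp: dist_commute)
    then show ?thesis using G O by simp
  qed
  have sec: "\<exists>v c. v \<noteq> 0 \<and> {z'. (y, x' + z') \<in> E} \<subseteq> {z'. v \<bullet> z' = c}" for y x' :: "real^'d"
  proof (cases "infdist y M < R")
    case True
    define p where "p = proj_onto M y"
    have p: "p \<in> M" "dist y p = infdist y M" using proj[OF True] unfolding p_def by auto
    obtain v where v: "v \<noteq> 0" "v \<in> tangent_space M p" using tangent_nonzero[OF manifold(1) dims(1) p(1)] by blast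
    have "{z'. (y, x' + z') \<in> E} \<subseteq> {z'. v \<bullet> z' = v \<bullet> (p - x')}"
    proof
      fix z' assume "z' \<in> {z'. (y, x' + z') \<in> E}"
      then obtain p' where p': "p' \<in> M" "dist y p' = infdist y M" "dist (x' + z') p' = infdist (x' + z') M"
        unfolding E_def by auto
      have "p' = p" using uniq[OF True] p p'(1,2) by blast
      then have "(x' + z' - p) \<bullet> v = 0"
        using nearest_normal[OF p(1) nearest_is_min[OF p'(3)[unfolded \<open>p' = p\<close>]] v(2)] by blast
      then show "z' \<in> {z'. v \<bullet> z' = v \<bullet> (p - x')}" by (simp add: inner_diff_left inner_diff_right inner_add_left inner_commute algebra_simps)
    qed
    then show ?thesis using v(1) by blast
  next
    case False
    obtain b :: "real^'d" where b: "b \<in> Basis" using nonempty_Basis by blast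
    have "{z'. (y, x' + z') \<in> E} = {}" using False unfolding E_def by auto
    then show ?thesis using nonzero_Basis[OF b] by blast
  qed
  have N: "{\<omega>\<in>space P. (X \<omega> + Z \<omega>, X' \<omega> + Z' \<omega>) \<in> E} \<in> null_sets P"
    by (rule prob_part[OF P rv Eb sec noise(2) indep])
  show ?thesis
  proof (rule AE_I'[OF N], safe)
    fix \<omega> assume \<omega>: "\<omega> \<in> space P" "X \<omega> + Z \<omega> \<in> normal_tube M (\<epsilon> powr (\<tau> + 1))"
      "X' \<omega> + Z' \<omega> \<in> normal_tube M (\<epsilon> powr (\<tau> + 1))"
      "proj_onto M (X \<omega> + Z \<omega>) = proj_onto M (X' \<omega> + Z' \<omega>)"
    define y where "y = X \<omega> + Z \<omega>"
    define y' where "y' = X' \<omega> + Z' \<omega>"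
    have iy: "infdist y M < R" "infdist y' M < R" using tube \<omega>(2,3) unfolding r_def y_def y'_def by auto
    have "(y, y') \<in> E"
      using proj[OF iy(1)] proj[OF iy(2)] iy(1) \<omega>(4) unfolding E_def y_def y'_def by auto
    then show "(X \<omega> + Z \<omega>, X' \<omega> + Z' \<omega>) \<in> E" unfolding y_def y'_def .
  qed
qed

end
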